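(* Let $\Gamma$ be a strongly $\delta$-hyperbolic directed graph (real $\delta\ge0$). Then every directed geodesic triangle $T$ in $\Gamma$ can be tessellated by five directed geodesic triangles (some of which may be trivial triangles with a single vertex), each of size at most $\frac{3}{4}\Sigma(T)+2\delta+1$.
   Context: Directed graphs may have loops and multiple edges; $d(u,v)$ is the length of a shortest directed path from $u$ to $v$ ($\infty$ if none). Out-ball $\overrightarrow{\mathcal{B}}_r(x)=\{y : d(x,y)\le r\}$, in-ball $\overleftarrow{\mathcal{B}}_r(x)=\{y : d(y,x)\le r\}$, extended to sets by union. A path $[x_0,\dots,x_n]$ has length $n$ and is a geodesic if $n=d(x_0,x_n)$. Paths are composable if the end of the first is the start of the second ($\circ$ is concatenation) and parallel if they share start and end. A directed geodesic triangle is an ordered triple $(p,q,r)$ of geodesics with $p,q$ composable and $p\circ q$ parallel to $r$; its size is $\Sigma(p,q,r)=|p|+|q|$. It is $\delta$-thin if every vertex of $r$ lies in $\overrightarrow{\mathcal{B}}_\delta(p)\cup\overleftarrow{\mathcal{B}}_\delta(q)$, every vertex of $p$ lies in $\overrightarrow{\mathcal{B}}_\delta(r)\cup\overleftarrow{\mathcal{B}}_\delta(q)$, and every vertex of $q$ lies in $\overrightarrow{\mathcal{B}}_\delta(p)\cup\overleftarrow{\mathcal{B}}_\delta(r)$. A directed graph is strongly $\delta$-hyperbolic if all its directed geodesic triangles are $\delta$-thin. Tessellation: given directed geodesic triangles $T_i=(p_i,q_i,r_i)$, form the directed $2$-complex on $\Gamma$ with one $2$-cell per $T_i$ having top $p_i\circ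 q_i$ and bottom $r_i$ (plus its formal inverse swapping top and bottom). Parallel paths are homotopic if one can be transformed into the other by finitely many steps each replacing a subpath equal to the top of a $2$-cell by its bottom or vice versa. The $T_i$ tessellate parallel paths $p,q$ if $p,q$ are homotopic in this complex, and tessellate a triangle $(p,q,r)$ if they tessellate $p\circ q$ and $r$. *)

theory Defs
  imports "Graph_Theory.Digraph" "Graph_Theory.Arc_Walk" "HOL-Library.Extended_Nat" Complex_Main
begin

text \<open>Directed graphs (loops and multiple arcs allowed) are Graph_Theory digraphs
  ('a vertices, 'b arcs, tail/head maps).  A path is a triple (start, arc list, end).\<close>

type_synonym ('a,'b) dpath = "'a \<times> 'b list \<times> 'a"

definition pstart :: "('a,'b) dpath \<Rightarrow> 'a" where "pstart P = fst P"
definition parcs :: "('a,'b) dpath \<Rightarrow> 'b list" where "parcs P = fst (snd P)"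
definition pend :: "('a,'b) dpath \<Rightarrow> 'a" where "pend P = snd (snd P)"

definition plen :: "('a,'b) dpath \<Rightarrow> nat" where "plen P = length (parcs P)"

definition is_path :: "('a,'b) pre_digraph \<Rightarrow> ('a,'b) dpath \<Rightarrow> bool" where
  "is_path G P \<longleftrightarrow> pre_digraph.awalk G (pstart P) (parcs P) (pend P)"

definition pverts :: "('a,'b) pre_digraph \<Rightarrow> ('a,'b) dpath \<Rightarrow> 'a set" where
  "pverts G P = set (pre_digraph.awalk_verts G (pstart P) (parcs P))"

definition pcomp :: "('a,'b) dpath \<Rightarrow> ('a,'b) dpath \<Rightarrow> ('a,'b) dpath" where
  "pcomp P Q = (pstart P, parcs P @ parcs Q, pend Q)"

text \<open>Directed distance (infinity if there is no directed path).\<close>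
definition ddist :: "('a,'b) pre_digraph \<Rightarrow> 'a \<Rightarrow> 'a \<Rightarrow> enat" where
  "ddist G u v = (INF p \<in> {p. pre_digraph.awalk G u p v}. enat (length p))"

definition geodesic :: "('a,'b) pre_digraph \<Rightarrow> ('a,'b) dpath \<Rightarrow> bool" where
  "geodesic G P \<longleftrightarrow> is_path G P \<and> enat (plen P) = ddist G (pstart P) (pend P)"

definition dist_le :: "('a,'b) pre_digraph \<Rightarrow> 'a \<Rightarrow> 'a \<Rightarrow> real \<Rightarrow> bool" where
  "dist_le G x y r \<longleftrightarrow> (\<exists>n. ddist G x y = enat n \<and> real n \<le> r)"

definition out_ball :: "('a,'b) pre_digraph \<Rightarrow> 'a set \<Rightarrow> real \<Rightarrow> 'a set" where
  "out_ball G S r = {y \<in> verts G. \<exists>x\<in>S. dist_le G x y r}"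

definition in_ball :: "('a,'b) pre_digraph \<Rightarrow> 'a set \<Rightarrow> real \<Rightarrow> 'a set" where
  "in_ball G S r = {y \<in> verts G. \<exists>x\<in>S. dist_le G y x r}"

type_synonym ('a,'b) dtriangle = "('a,'b) dpath \<times> ('a,'b) dpath \<times> ('a,'b) dpath"

definition geo_triangle :: "('a,'b) pre_digraph \<Rightarrow> ('a,'b) dtriangle \<Rightarrow> bool" where
  "geo_triangle G T \<longleftrightarrow> (case T of (p,q,r) \<Rightarrow>
     geodesic G p \<and> geodesic G q \<and> geodesic G r \<and>
     pend p = pstart q \<and> pstart r = pstart p \<and> pend r = pend q)"

definition tri_size :: "('a,'b) dtriangle \<Rightarrow> nat" where
  "tri_size T = (case T of (p,q,r) \<Rightarrow> plen p + plen q)"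

definition thin_triangle :: "('a,'b) pre_digraph \<Rightarrow> real \<Rightarrow> ('a,'b) dtriangle \<Rightarrow> bool" where
  "thin_triangle G \<delta> T \<longleftrightarrow> (case T of (p,q,r) \<Rightarrow>
     pverts G r \<subseteq> out_ball G (pverts G p) \<delta> \<union> in_ball G (pverts G q) \<delta> \<and>
     pverts G p \<subseteq> out_ball G (pverts G r) \<delta> \<union> in_ball G (pverts G q) \<delta> \<and>
     pverts G q \<subseteq> out_ball G (pverts G p) \<delta> \<union> in_ball G (pverts G r) \<delta>)"

definition strongly_hyperbolic :: "('a,'b) pre_digraph \<Rightarrow> real \<Rightarrow> bool" where
  "strongly_hyperbolic G \<delta> \<longleftrightarrow> (\<forall>T. geo_triangle G T \<longrightarrow> thin_triangle G \<delta> T)"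

text \<open>One elementary homotopy step in the 2-complex with one 2-cell per triangle of Ts:
  inside path P, a subpath equal to the top p\<circ>q of a cell (starting at the cell's
  start vertex) is replaced by its bottom r, or vice versa.\<close>
definition cell_step :: "('a,'b) pre_digraph \<Rightarrow> ('a,'b) dtriangle list \<Rightarrow>
    ('a,'b) dpath \<Rightarrow> ('a,'b) dpath \<Rightarrow> bool" where
  "cell_step G Ts P P' \<longleftrightarrow> pstart P' = pstart P \<and> pend P' = pend P \<and>
     (\<exists>T\<in>set Ts. case T of (p,q,r) \<Rightarrow>
        (\<exists>a b x. pre_digraph.awalk G (pstart P) a x \<and> x = pstart p \<and>
           ((parcs P = a @ parcs (pcomp p q) @ b \<and> parcs P' = a @ parcs r @ b) \<or>
            (parcs P = a @ parcs r @ b \<and> parcs P' = a @ parcs (pcomp p q) @ b))))"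

definition homotopic :: "('a,'b) pre_digraph \<Rightarrow> ('a,'b) dtriangle list \<Rightarrow>
    ('a,'b) dpath \<Rightarrow> ('a,'b) dpath \<Rightarrow> bool" where
  "homotopic G Ts P P' \<longleftrightarrow> (cell_step G Ts)\<^sup>*\<^sup>* P P'"

definition tessellates_triangle :: "('a,'b) pre_digraph \<Rightarrow> ('a,'b) dtriangle list \<Rightarrow>
    ('a,'b) dtriangle \<Rightarrow> bool" where
  "tessellates_triangle G Ts T \<longleftrightarrow> (case T of (p,q,r) \<Rightarrow> homotopic G Ts (pcomp p q) r)"

end

theory Submission
  imports Defs
begin

context wf_digraph begin

lemma ddist_le_walk: "awalk u q v \<Longrightarrow> ddist G u v \<le> enat (length q)"
  unfolding ddist_def by (rule INF_lower) simp

lemma gd_iff: "geodesic G (u,As,v) \<longleftrightarrow> awalk u As v \<and> (\<forall>q. awalk u q v \<longrightarrow> length As \<le> length q)"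
proof
  assume a: "geodesic G (u,As,v)"
  hence w: "awalk u As v" and e: "enat (length As) = ddist G u v"
    by (auto simp: geodesic_def is_path_def plen_def parcs_def pstart_def pend_def)
  have "length As \<le> length q" if "awalk u q v" for q
  proof -
    have "enat (length As) \<le> enat (length q)" using e ddist_le_walk[OF that] by simp
    thus ?thesis by simp
  qed
  thus "awalk u As v \<and> (\<forall>q. awalk u q v \<longrightarrow> length As \<le> length q)"
    using w by blast
next
  assume a: "awalk u As v \<and> (\<forall>q. awalk u q v \<longrightarrow> length As \<le> length q)"
  have "ddist G u v = enat (length As)"
  proof (rule antisym)
    show "ddist G u v \<le> enat (length As)" using a ddist_le_walk by blast
    show "enat (length As) \<le> ddist G u v" unfolding ddist_def
      by (rule INF_greatest) (use a in auto)
  qed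
  thus "geodesic G (u,As,v)" using a
    by (auto simp: geodesic_def is_path_def plen_def parcs_def pstart_def pend_def)
qed

lemma geo_walk: "geodesic G (u,As,v) \<Longrightarrow> awalk u As v"
  by (simp add: gd_iff)

lemma geo_exists: "awalk u c v \<Longrightarrow> \<exists>D. geodesic G (u,D,v) \<and> length D \<le> length c"
proof -
  assume "awalk u c v"
  from ex_has_least_nat[of "\<lambda>D. awalk u D v" c length, OF this]
  obtain D where "awalk u D v" "\<forall>q. awalk u q v \<longrightarrow> length D \<le> length q" by blast
  thus ?thesis using \<open>awalk u c v\<close> by (auto simp: gd_iff)
qed

lemma dist_le_geo: "dist_le G u v d \<Longrightarrow> \<exists>D. geodesic G (u,D,v) \<and> real (length D) \<le> d"
proof -
  assume "dist_le G u v d"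
  then obtain n where n: "ddist G u v = enat n" "real n \<le> d" by (auto simp: dist_le_def)
  have "{p. awalk u p v} \<noteq> {}"
  proof
    assume "{p. awalk u p v} = {}"
    hence "ddist G u v = \<infinity>" unfolding ddist_def by (simp add: top_enat_def)
    with n show False by simp
  qed
  then obtain c where "awalk u c v" by blast
  from geo_exists[OF this] obtain D where D: "geodesic G (u,D,v)" by blast
  hence "enat (length D) = ddist G u v"
    by (auto simp: geodesic_def plen_def parcs_def pstart_def pend_def)
  with n D show ?thesis by auto
qed

lemma geo_split:
  assumes "geodesic G (u, A1@A2, v)" "awalk u A1 w"
  shows "geodesic G (u,A1,w)" "geodesic G (w,A2,v)"
proof -
  have wa: "awalk u (A1@A2) v" and m: "\<forall>q. awalk u q v \<longrightarrow> length (A1@A2) \<le> length q"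
    using assms(1) by (auto simp: gd_iff)
  have wl: "awlast u A1 = w" using assms(2) by blast
  have w2: "awalk w A2 v" using wa wl by simp
  show "geodesic G (u,A1,w)" unfolding gd_iff
  proof (intro conjI allI impI)
    fix q assume "awalk u q w"
    hence "awalk u (q@A2) v" using w2 by (rule awalk_appendI)
    hence "length (A1@A2) \<le> length (q@A2)" using m by blast
    thus "length A1 \<le> length q" by simp
  qed (rule assms(2))
  show "geodesic G (w,A2,v)" unfolding gd_iff
  proof (intro conjI allI impI)
    fix q assume "awalk w q v"
    hence "awalk u (A1@q) v" using assms(2) by (intro awalk_appendI)
    hence "length (A1@A2) \<le> length (A1@q)" using m by blast
    thus "length A2 \<le> length q" by simp
  qed (rule w2)
qed

lemma split_at: "awalk u A v \<Longrightarrow> \<exists>w. awalk u (take j A) w \<and> awalk w (drop j A) v"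
proof -
  assume "awalk u A v"
  hence "awalk u (take j A @ drop j A) v" by simp
  thus ?thesis unfolding awalk_append_iff by blast
qed

lemma vert_in: "awalk u (A1@A2) v \<Longrightarrow> awalk u A1 w \<Longrightarrow> w \<in> set (awalk_verts u (A1@A2))"
proof -
  assume a: "awalk u (A1@A2) v" "awalk u A1 w"
  have "awlast u A1 = w" using a(2) by blast
  moreover have "awalk_verts u (A1@A2) = awalk_verts u A1 @ tl (awalk_verts (awlast u A1) A2)"
    using a(1) by (rule awalk_verts_append)
  ultimately show ?thesis by (metis Un_iff awalk_verts_non_Nil last_in_set set_append)
qed

lemma decomp: "awalk u A v \<Longrightarrow> w \<in> set (awalk_verts u A) \<Longrightarrow> \<exists>A1 A2. A = A1@A2 \<and> awalk u A1 w \<and> awalk w A2 v"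
  by (rule awalk_decomp)

lemma geo_tri_simp[simp]: "geo_triangle G ((a,A,b),(b',B,c),(a',C,c')) \<longleftrightarrow>
   geodesic G (a,A,b) \<and> geodesic G (b',B,c) \<and> geodesic G (a',C,c') \<and> b = b' \<and> a' = a \<and> c' = c"
  by (auto simp: geo_triangle_def pstart_def pend_def)

lemma tri_size_simp[simp]: "tri_size ((a,A,b),(b',B,c),(a',C,c')) = length A + length B"
  by (simp add: tri_size_def plen_def parcs_def)

lemma thin_p:
  assumes SH: "strongly_hyperbolic G \<delta>" and g: "geodesic G (a,A,b)" "geodesic G (b,B,c)" "geodesic G (a,C,c)"
    and w: "w \<in> set (awalk_verts a A)"
  shows "(\<exists>v\<in>set (awalk_verts a C). dist_le G v w \<delta>) \<or> (\<exists>v\<in>set (awalk_verts b B). dist_le G w v \<delta>)"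
proof -
  have "thin_triangle G \<delta> ((a,A,b),(b,B,c),(a,C,c))" using SH g by (simp add: strongly_hyperbolic_def)
  thus ?thesis using w
    by (auto simp: thin_triangle_def pverts_def pstart_def parcs_def out_ball_def in_ball_def)
qed

lemma thin_r:
  assumes SH: "strongly_hyperbolic G \<delta>" and g: "geodesic G (a,A,b)" "geodesic G (b,B,c)" "geodesic G (a,C,c)"
    and w: "w \<in> set (awalk_verts a C)"
  shows "(\<exists>v\<in>set (awalk_verts a A). dist_le G v w \<delta>) \<or> (\<exists>v\<in>set (awalk_verts b B). dist_le G w v \<delta>)"
proof -
  have "thin_triangle G \<delta> ((a,A,b),(b,B,c),(a,C,c))" using SH g by (simp add: strongly_hyperbolic_def)
  thus ?thesis using w
    by (auto simp: thin_triangle_def pverts_def pstart_def parcs_def out_ball_def in_ball_def)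
qed

lemma thin_q:
  assumes SH: "strongly_hyperbolic G \<delta>" and g: "geodesic G (a,A,b)" "geodesic G (b,B,c)" "geodesic G (a,C,c)"
    and w: "w \<in> set (awalk_verts b B)"
  shows "(\<exists>v\<in>set (awalk_verts a A). dist_le G v w \<delta>) \<or> (\<exists>v\<in>set (awalk_verts a C). dist_le G w v \<delta>)"
proof -
  have "thin_triangle G \<delta> ((a,A,b),(b,B,c),(a,C,c))" using SH g by (simp add: strongly_hyperbolic_def)
  thus ?thesis using w
    by (auto simp: thin_triangle_def pverts_def pstart_def parcs_def out_ball_def in_ball_def)
qed

lemma hom_refl: "homotopic G Ts P P"
  by (simp add: homotopic_def)

lemma hom_trans: "homotopic G Ts P Q \<Longrightarrow> homotopic G Ts Q R \<Longrightarrow> homotopic G Ts P R"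
  by (simp add: homotopic_def)

lemma cell_sym: assumes "cell_step G Ts P Q" shows "cell_step G Ts Q P"
proof -
  have e: "pstart Q = pstart P" "pend Q = pend P" using assms by (auto simp: cell_step_def)
  from assms obtain T where T: "T \<in> set Ts" and
    ex: "case T of (p,q,r) \<Rightarrow>
        (\<exists>a b x. awalk (pstart P) a x \<and> x = pstart p \<and>
           ((parcs P = a @ parcs (pcomp p q) @ b \<and> parcs Q = a @ parcs r @ b) \<or>
            (parcs P = a @ parcs r @ b \<and> parcs Q = a @ parcs (pcomp p q) @ b)))"
    unfolding cell_step_def by blast
  obtain p q r where Tp: "T = (p,q,r)" by (cases T) auto
  from ex Tp obtain a b x where ax: "awalk (pstart Q) a x" "x = pstart p"
      and dis: "((parcs P = a @ parcs (pcomp p q) @ b \<and> parcs Q = a @ parcs r @ b) \<or>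
            (parcs P = a @ parcs r @ b \<and> parcs Q = a @ parcs (pcomp p q) @ b))"
    using e by auto
  show ?thesis unfolding cell_step_def
    apply (intro conjI)
      apply (simp add: e)
     apply (simp add: e)
    apply (rule bexI[OF _ T])
    apply (unfold Tp prod.case)
    apply (rule exI[of _ a], rule exI[of _ b], rule exI[of _ x])
    using ax dis by blast
qed

lemma hom_sym: "homotopic G Ts P Q \<Longrightarrow> homotopic G Ts Q P"
  unfolding homotopic_def
proof (induction rule: rtranclp_induct)
  case base then show ?case by simp
next
  case (step y z)
  then show ?case by (meson cell_sym converse_rtranclp_into_rtranclp)
qed

lemma hom_mono:
  assumes sub: "set Ts \<subseteq> set Ts'" and h: "homotopic G Ts P Q"
  shows "homotopic G Ts' P Q"
proof -
  have st: "cell_step G Ts' A B" if c: "cell_step G Ts A B" for A B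
  proof -
    from c have e1: "pstart B = pstart A" and e2: "pend B = pend A"
      unfolding cell_step_def by simp_all
    from c have ex: "\<exists>T\<in>set Ts. case T of (p,q,r) \<Rightarrow>
        (\<exists>a b x. awalk (pstart A) a x \<and> x = pstart p \<and>
           ((parcs A = a @ parcs (pcomp p q) @ b \<and> parcs B = a @ parcs r @ b) \<or>
            (parcs A = a @ parcs r @ b \<and> parcs B = a @ parcs (pcomp p q) @ b)))"
      unfolding cell_step_def by (rule conjunct2[THEN conjunct2])
    from ex obtain T where T: "T \<in> set Ts" and phi: "case T of (p,q,r) \<Rightarrow>
        (\<exists>a b x. awalk (pstart A) a x \<and> x = pstart p \<and>
           ((parcs A = a @ parcs (pcomp p q) @ b \<and> parcs B = a @ parcs r @ b) \<or>
            (parcs A = a @ parcs r @ b \<and> parcs B = a @ parcs (pcomp p q) @ b)))"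
      by (rule bexE)
    have T': "T \<in> set Ts'" using T sub by (rule subsetD[rotated])
    show ?thesis unfolding cell_step_def
      apply (intro conjI e1 e2)
      apply (rule bexI[OF _ T'])
      by (rule phi)
  qed
  from h have "(cell_step G Ts)\<^sup>*\<^sup>* P Q" by (simp add: homotopic_def)
  hence "(cell_step G Ts')\<^sup>*\<^sup>* P Q"
  proof (induction rule: rtranclp_induct)
    case base then show ?case by simp
  next
    case (step y z) then show ?case using st by (meson rtranclp.rtrancl_into_rtrancl)
  qed
  thus ?thesis by (simp add: homotopic_def)
qed

lemma hom_cell:
  assumes "((a,A,b),(b,B,c),(a,C,c)) \<in> set Ts" "a \<in> verts G"
  shows "homotopic G Ts (a, A@B, c) (a, C, c)"
proof -
  have "cell_step G Ts (a, A@B, c) (a, C, c)"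
    unfolding cell_step_def
    apply (simp add: pstart_def pend_def parcs_def pcomp_def)
    apply (rule bexI[OF _ assms(1)])
    apply (simp add: pstart_def pend_def parcs_def pcomp_def)
    apply (rule exI[of _ "[]"])
    using assms(2) by (auto simp: awalk_Nil_iff)
  thus ?thesis by (simp add: homotopic_def)
qed

lemma hom_ctx:
  assumes h: "homotopic G Ts (v,As,w) (v,Bs,w)" and pre: "awalk u pre v"
    and X: "X = pre@As@suf" and Y: "Y = pre@Bs@suf"
  shows "homotopic G Ts (u,X,z) (u,Y,z)"
proof -
  define f where "f P = (u, pre @ parcs P @ suf, z)" for P :: "('a,'b) dpath"
  have stp: "cell_step G Ts (f P) (f P') \<and> pstart P' = v"
    if cs: "cell_step G Ts P P'" and ps: "pstart P = v" for P P'
  proof -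
    from cs obtain T where T: "T \<in> set Ts" and se: "pstart P' = pstart P" "pend P' = pend P"
      and ex: "case T of (p,q,r) \<Rightarrow>
        (\<exists>a b x. awalk (pstart P) a x \<and> x = pstart p \<and>
           ((parcs P = a @ parcs (pcomp p q) @ b \<and> parcs P' = a @ parcs r @ b) \<or>
            (parcs P = a @ parcs r @ b \<and> parcs P' = a @ parcs (pcomp p q) @ b)))"
      unfolding cell_step_def by blast
    obtain p q r where Tp: "T = (p,q,r)" by (cases T) auto
    from ex Tp obtain a b x where ax: "awalk v a x" "x = pstart p"
      and dis: "((parcs P = a @ parcs (pcomp p q) @ b \<and> parcs P' = a @ parcs r @ b) \<or>
            (parcs P = a @ parcs r @ b \<and> parcs P' = a @ parcs (pcomp p q) @ b))"
      using ps by auto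
    have "awalk u (pre @ a) x" using pre ax(1) by (rule awalk_appendI)
    hence "cell_step G Ts (f P) (f P')"
      unfolding cell_step_def f_def
      apply (intro conjI)
        apply (simp add: pstart_def)
       apply (simp add: pend_def)
      apply (rule bexI[OF _ T])
      apply (unfold Tp prod.case)
      apply (rule exI[of _ "pre@a"], rule exI[of _ "b@suf"], rule exI[of _ x])
      using ax(2) dis by (auto simp: pstart_def parcs_def)
    thus ?thesis using se ps by simp
  qed
  have "(cell_step G Ts)\<^sup>*\<^sup>* (f (v,As,w)) (f Q) \<and> pstart Q = v"
    if "(cell_step G Ts)\<^sup>*\<^sup>* (v,As,w) Q" for Q
    using that
  proof (induction rule: rtranclp_induct)
    case base then show ?case by (simp add: pstart_def)
  next
    case (step y z')
    have "cell_step G Ts (f y) (f z') \<and> pstart z' = v" using stp[OF step.hyps(2)] step.IH by blast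
    thus ?case using step.IH by (meson rtranclp.rtrancl_into_rtrancl)
  qed
  from this[of "(v,Bs,w)"] h show ?thesis
    by (simp add: homotopic_def f_def parcs_def X Y)
qed

end

context wf_digraph begin

lemma nn: "0 \<le> real (n::nat)" by simp

lemma caseA:
  assumes d0: "0 \<le> \<delta>" and SH: "strongly_hyperbolic G \<delta>"
    and gp: "geodesic G (x,P,y)" and gq: "geodesic G (y,Q,z)" and gr: "geodesic G (x,R,z)"
    and mn: "length Q \<le> length P"
  shows "\<exists>Ts. length Ts = 5 \<and> (\<forall>T'\<in>set Ts. geo_triangle G T' \<and>
     real (tri_size T') \<le> 3/4 * real (length P + length Q) + 2*\<delta> + 1) \<and>
     homotopic G Ts (x, P@Q, z) (x, R, z)"
proof -
  define S where "S = length P + length Q"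
  define j where "j = (S+3) div 4"
  have j1: "S \<le> 4*j" and j2: "4*j \<le> S+3" and jP: "j \<le> length P"
    using mn unfolding j_def S_def by auto
  have Rj1: "real S \<le> 4*real j" and Rj2: "4*real j \<le> real S + 3"
    using j1 j2 by linarith+
  have RS: "real S = real (length P) + real (length Q)" by (simp add: S_def)
  have Rmn: "real (length Q) \<le> real (length P)" using mn by simp
  have wP: "awalk x P y" and wQ: "awalk y Q z" and wR: "awalk x R z"
    using gp gq gr by (auto dest: geo_walk)
  have "awalk x (P@Q) z" using wP wQ by (rule awalk_appendI)
  hence "length R \<le> length (P@Q)" using gr unfolding gd_iff by blast
  hence kS: "length R \<le> S" unfolding S_def by simp
  define P1 P2 where "P1 = take j P" and "P2 = drop j P"
  have PP: "P = P1 @ P2" by (simp add: P1_def P2_def)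
  have lP1: "length P1 = j" using jP by (simp add: P1_def)
  have RlP1: "real (length P1) = real j" using lP1 by simp
  have RP: "real (length P) = real j + real (length P2)" using PP lP1
    by (metis length_append of_nat_add)
  obtain w where w1: "awalk x P1 w" and w2: "awalk w P2 y"
    using split_at[OF wP, of j] unfolding P1_def P2_def by blast
  have gp1: "geodesic G (x,P1,w)" and gp2: "geodesic G (w,P2,y)"
    using geo_split[of x P1 P2 y w] gp PP w1 by auto
  have wv: "w \<in> set (awalk_verts x P)" using vert_in[of x P1 P2 y w] wP PP w1 by simp
  have xv: "x \<in> verts G" using wP by blast
  have wverts: "w \<in> verts G" using w2 by blast
  have xnil: "awalk x [] x" using xv by (simp add: awalk_Nil_iff)
  from thin_p[OF SH gp gq gr wv] show ?thesis
  proof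
    assume "\<exists>v\<in>set (awalk_verts y Q). dist_le G w v \<delta>"
    then obtain v where vQ: "v \<in> set (awalk_verts y Q)" and dv: "dist_le G w v \<delta>" by blast
    obtain Q1 Q2 where QQ: "Q = Q1@Q2" and q1: "awalk y Q1 v" and q2: "awalk v Q2 z"
      using decomp[OF wQ vQ] by blast
    have gq1: "geodesic G (y,Q1,v)" and gq2: "geodesic G (v,Q2,z)"
      using geo_split[of y Q1 Q2 z v] gq QQ q1 by auto
    obtain Gs where gg: "geodesic G (w,Gs,v)" and lG: "real (length Gs) \<le> \<delta>"
      using dist_le_geo[OF dv] by blast
    obtain H where gh: "geodesic G (w,H,z)" and lH: "length H \<le> length (Gs@Q2)"
      using geo_exists[OF awalk_appendI[OF geo_walk[OF gg] q2]] by blast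
    have RH: "real (length H) \<le> real (length Gs) + real (length Q2)" using lH by simp
    have RQ: "real (length Q) = real (length Q1) + real (length Q2)" using QQ by simp
    define c1 where "c1 = ((w,P2,y),(y,Q1,v),(w,Gs,v))"
    define c2 where "c2 = ((w,Gs,v),(v,Q2,z),(w,H,z))"
    define c3 where "c3 = ((x,P1,w),(w,H,z),(x,R,z))"
    define Ts where "Ts = [c1,c2,c3,c3,c3]"
    have h1: "homotopic G Ts (w, P2@Q1, v) (w, Gs, v)"
      by (rule hom_cell) (auto simp: Ts_def c1_def wverts)
    have h2: "homotopic G Ts (w, Gs@Q2, z) (w, H, z)"
      by (rule hom_cell) (auto simp: Ts_def c2_def wverts)
    have h3: "homotopic G Ts (x, P1@H, z) (x, R, z)"
      by (rule hom_cell) (auto simp: Ts_def c3_def xv)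
    have s1: "homotopic G Ts (x, P@Q, z) (x, P1@Gs@Q2, z)"
      by (rule hom_ctx[OF h1 w1]) (simp_all add: PP QQ)
    have s2: "homotopic G Ts (x, P1@Gs@Q2, z) (x, P1@H, z)"
      by (rule hom_ctx[OF h2 w1, where suf="[]"]) simp_all
    have hom: "homotopic G Ts (x, P@Q, z) (x, R, z)" using s1 s2 h3 by (meson hom_trans)
    have z1: "real (length P2 + length Q1) \<le> 3/4 * real (length P + length Q) + 2*\<delta> + 1"
      using Rj1 Rj2 RS RP RQ d0 nn[of "length P"] nn[of "length P1"] nn[of "length P2"] nn[of "length Q"] nn[of "length Q1"] nn[of "length Q2"] nn[of "length R"] nn[of "length R1"] nn[of "length R2"] nn[of "length R11"] nn[of "length R12"] nn[of "length Gs"] nn[of "length G1"] nn[of "length G2"] nn[of "length G'"] nn[of "length H"] nn[of "length H'"] nn[of "length P11"] nn[of "length P12"] RlP1 unfolding of_nat_add by argo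
    have z2: "real (length Gs + length Q2) \<le> 3/4 * real (length P + length Q) + 2*\<delta> + 1"
      using Rj1 Rj2 RS RP RQ d0 lG Rmn nn[of "length P"] nn[of "length P1"] nn[of "length P2"] nn[of "length Q"] nn[of "length Q1"] nn[of "length Q2"] nn[of "length R"] nn[of "length R1"] nn[of "length R2"] nn[of "length R11"] nn[of "length R12"] nn[of "length Gs"] nn[of "length G1"] nn[of "length G2"] nn[of "length G'"] nn[of "length H"] nn[of "length H'"] nn[of "length P11"] nn[of "length P12"] RlP1 unfolding of_nat_add by argo
    have z3: "real (length P1 + length H) \<le> 3/4 * real (length P + length Q) + 2*\<delta> + 1"
      using Rj1 Rj2 RS RP RQ d0 lG Rmn RH lP1 nn[of "length P"] nn[of "length P1"] nn[of "length P2"] nn[of "length Q"] nn[of "length Q1"] nn[of "length Q2"] nn[of "length R"] nn[of "length R1"] nn[of "length R2"] nn[of "length R11"] nn[of "length R12"] nn[of "length Gs"] nn[of "length G1"] nn[of "length G2"] nn[of "length G'"] nn[of "length H"] nn[of "length H'"] nn[of "length P11"] nn[of "length P12"] RlP1 unfolding of_nat_add by argo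
    show ?thesis
      apply (rule exI[of _ Ts])
      using hom z1 z2 z3 gp1 gp2 gq1 gq2 gg gh gr
      by (simp add: Ts_def c1_def c2_def c3_def)
  next
    assume "\<exists>v\<in>set (awalk_verts x R). dist_le G v w \<delta>"
    then obtain v where vR: "v \<in> set (awalk_verts x R)" and dv: "dist_le G v w \<delta>" by blast
    obtain R1 R2 where RR: "R = R1@R2" and r1: "awalk x R1 v" and r2: "awalk v R2 z"
      using decomp[OF wR vR] by blast
    have gr1: "geodesic G (x,R1,v)" and gr2: "geodesic G (v,R2,z)"
      using geo_split[of x R1 R2 z v] gr RR r1 by auto
    obtain Gs where gg: "geodesic G (v,Gs,w)" and lG: "real (length Gs) \<le> \<delta>"
      using dist_le_geo[OF dv] by blast
    obtain H where gh: "geodesic G (w,H,z)" and lH: "length H \<le> length (P2@Q)"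
      using geo_exists[OF awalk_appendI[OF w2 wQ]] by blast
    have RH: "real (length H) \<le> real (length P2) + real (length Q)" using lH by simp
    have Ri: "real (length R1) \<le> real S" using kS RR by simp
    define B where "B = 3/4 * real (length P + length Q) + 2*\<delta> + 1"
    have T1: "\<exists>a1 a2 a3. (\<forall>T\<in>set [a1,a2,a3]. geo_triangle G T \<and> real (tri_size T) \<le> B)
               \<and> homotopic G [a1,a2,a3] (x, R1@Gs, w) (x, P1, w)"
    proof -
      define i where "i = length R1"
      define R11 R12 where "R11 = take (i div 2) R1" and "R12 = drop (i div 2) R1"
      have R1R: "R1 = R11 @ R12" by (simp add: R11_def R12_def)
      have lR11: "length R11 = i div 2" by (simp add: R11_def i_def)
      have lR12: "length R12 = i - i div 2" by (simp add: R12_def i_def)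
      have Ra: "2 * real (length R11) \<le> real i" "real i \<le> 2 * real (length R11) + 1"
        "real i = real (length R11) + real (length R12)" using lR11 lR12 by linarith+
      have Ri': "real i \<le> real S" using Ri i_def by simp
      obtain v' where r11: "awalk x R11 v'" and r12: "awalk v' R12 v"
        using split_at[OF r1, of "i div 2"] unfolding R11_def R12_def by blast
      have gr11: "geodesic G (x,R11,v')" and gr12: "geodesic G (v',R12,v)"
        using geo_split[of x R11 R12 v v'] gr1 R1R r11 by auto
      have v'in: "v' \<in> set (awalk_verts x R1)" using vert_in[of x R11 R12 v v'] r1 R1R r11 by simp
      have v'v: "v' \<in> verts G" using r12 by blast
      from thin_p[OF SH gr1 gg gp1 v'in] show ?thesis
      proof
        assume "\<exists>u\<in>set (awalk_verts v Gs). dist_le G v' u \<delta>"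
        then obtain u where uG: "u \<in> set (awalk_verts v Gs)" and du: "dist_le G v' u \<delta>" by blast
        obtain G1 G2 where GG: "Gs = G1@G2" and g1: "awalk v G1 u" and g2: "awalk u G2 w"
          using decomp[OF geo_walk[OF gg] uG] by blast
        have gg1: "geodesic G (v,G1,u)" and gg2: "geodesic G (u,G2,w)"
          using geo_split[of v G1 G2 w u] gg GG g1 by auto
        obtain G' where gg': "geodesic G (v',G',u)" and lG': "real (length G') \<le> \<delta>"
          using dist_le_geo[OF du] by blast
        obtain H' where gh': "geodesic G (v',H',w)" and lH': "length H' \<le> length (G'@G2)"
          using geo_exists[OF awalk_appendI[OF geo_walk[OF gg'] g2]] by blast
        have RH': "real (length H') \<le> real (length G') + real (length G2)" using lH' by simp
        have RG: "real (length Gs) = real (length G1) + real (length G2)" using GG by simp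
        define a1 where "a1 = ((v',R12,v),(v,G1,u),(v',G',u))"
        define a2 where "a2 = ((v',G',u),(u,G2,w),(v',H',w))"
        define a3 where "a3 = ((x,R11,v'),(v',H',w),(x,P1,w))"
        have h1: "homotopic G [a1,a2,a3] (v', R12@G1, u) (v', G', u)"
          by (rule hom_cell) (auto simp: a1_def v'v)
        have h2: "homotopic G [a1,a2,a3] (v', G'@G2, w) (v', H', w)"
          by (rule hom_cell) (auto simp: a2_def v'v)
        have h3: "homotopic G [a1,a2,a3] (x, R11@H', w) (x, P1, w)"
          by (rule hom_cell) (auto simp: a3_def xv)
        have s1: "homotopic G [a1,a2,a3] (x, R1@Gs, w) (x, R11@G'@G2, w)"
          by (rule hom_ctx[OF h1 r11]) (simp_all add: R1R GG)
        have s2: "homotopic G [a1,a2,a3] (x, R11@G'@G2, w) (x, R11@H', w)"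
          by (rule hom_ctx[OF h2 r11, where suf="[]"]) simp_all
        have hom: "homotopic G [a1,a2,a3] (x, R1@Gs, w) (x, P1, w)"
          using s1 s2 h3 by (meson hom_trans)
        have z1: "real (length R12 + length G1) \<le> B"
          using Ra Ri' RG lG d0 RS nn[of "length P"] nn[of "length P1"] nn[of "length P2"] nn[of "length Q"] nn[of "length Q1"] nn[of "length Q2"] nn[of "length R"] nn[of "length R1"] nn[of "length R2"] nn[of "length R11"] nn[of "length R12"] nn[of "length Gs"] nn[of "length G1"] nn[of "length G2"] nn[of "length G'"] nn[of "length H"] nn[of "length H'"] nn[of "length P11"] nn[of "length P12"] RlP1 unfolding B_def of_nat_add by argo
        have z2: "real (length G' + length G2) \<le> B"
          using Ra Ri' RG lG lG' d0 RS nn[of "length P"] nn[of "length P1"] nn[of "length P2"] nn[of "length Q"] nn[of "length Q1"] nn[of "length Q2"] nn[of "length R"] nn[of "length R1"] nn[of "length R2"] nn[of "length R11"] nn[of "length R12"] nn[of "length Gs"] nn[of "length G1"] nn[of "length G2"] nn[of "length G'"] nn[of "length H"] nn[of "length H'"] nn[of "length P11"] nn[of "length P12"] RlP1 unfolding B_def of_nat_add by argo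
        have z3: "real (length R11 + length H') \<le> B"
          using Ra Ri' RG lG lG' RH' d0 RS nn[of "length P"] nn[of "length P1"] nn[of "length P2"] nn[of "length Q"] nn[of "length Q1"] nn[of "length Q2"] nn[of "length R"] nn[of "length R1"] nn[of "length R2"] nn[of "length R11"] nn[of "length R12"] nn[of "length Gs"] nn[of "length G1"] nn[of "length G2"] nn[of "length G'"] nn[of "length H"] nn[of "length H'"] nn[of "length P11"] nn[of "length P12"] RlP1 unfolding B_def of_nat_add by argo
        show ?thesis
          apply (rule exI[of _ a1], rule exI[of _ a2], rule exI[of _ a3])
          using hom z1 z2 z3 gr11 gr12 gg1 gg2 gg' gh' gp1
          by (simp add: a1_def a2_def a3_def)
      next
        assume "\<exists>u\<in>set (awalk_verts x P1). dist_le G u v' \<delta>"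
        then obtain u where uP: "u \<in> set (awalk_verts x P1)" and du: "dist_le G u v' \<delta>" by blast
        obtain P11 P12 where P1P: "P1 = P11@P12" and p11: "awalk x P11 u" and p12: "awalk u P12 w"
          using decomp[OF w1 uP] by blast
        have gp11: "geodesic G (x,P11,u)" and gp12: "geodesic G (u,P12,w)"
          using geo_split[of x P11 P12 w u] gp1 P1P p11 by auto
        obtain G' where gg': "geodesic G (u,G',v')" and lG': "real (length G') \<le> \<delta>"
          using dist_le_geo[OF du] by blast
        obtain H' where gh': "geodesic G (v',H',w)" and lH': "length H' \<le> length (R12@Gs)"
          using geo_exists[OF awalk_appendI[OF r12 geo_walk[OF gg]]] by blast
        have RH': "real (length H') \<le> real (length R12) + real (length Gs)" using lH' by simp
        have RP1: "real (length P11) \<le> real j" using P1P lP1 by simp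
        have uv: "u \<in> verts G" using p12 by blast
        define a1 where "a1 = ((x,P11,u),(u,G',v'),(x,R11,v'))"
        define a2 where "a2 = ((v',R12,v),(v,Gs,w),(v',H',w))"
        define a3 where "a3 = ((u,G',v'),(v',H',w),(u,P12,w))"
        have h1: "homotopic G [a1,a2,a3] (x, P11@G', v') (x, R11, v')"
          by (rule hom_cell) (auto simp: a1_def xv)
        have h2: "homotopic G [a1,a2,a3] (v', R12@Gs, w) (v', H', w)"
          by (rule hom_cell) (auto simp: a2_def v'v)
        have h3: "homotopic G [a1,a2,a3] (u, G'@H', w) (u, P12, w)"
          by (rule hom_cell) (auto simp: a3_def uv)
        have s1: "homotopic G [a1,a2,a3] (x, R1@Gs, w) (x, R11@H', w)"
          by (rule hom_ctx[OF h2 r11, where suf="[]"]) (simp_all add: R1R)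
        have s2: "homotopic G [a1,a2,a3] (x, R11@H', w) (x, P11@G'@H', w)"
          by (rule hom_ctx[OF hom_sym[OF h1] xnil, where suf="H'"]) simp_all
        have s3: "homotopic G [a1,a2,a3] (x, P11@G'@H', w) (x, P1, w)"
          by (rule hom_ctx[OF h3 p11, where suf="[]"]) (simp_all add: P1P)
        have hom: "homotopic G [a1,a2,a3] (x, R1@Gs, w) (x, P1, w)"
          using s1 s2 s3 by (meson hom_trans)
        have z1: "real (length P11 + length G') \<le> B"
          using Ra Ri' lG lG' d0 RS RP1 Rj2 nn[of "length P"] nn[of "length P1"] nn[of "length P2"] nn[of "length Q"] nn[of "length Q1"] nn[of "length Q2"] nn[of "length R"] nn[of "length R1"] nn[of "length R2"] nn[of "length R11"] nn[of "length R12"] nn[of "length Gs"] nn[of "length G1"] nn[of "length G2"] nn[of "length G'"] nn[of "length H"] nn[of "length H'"] nn[of "length P11"] nn[of "length P12"] RlP1 unfolding B_def of_nat_add by argo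
        have z2: "real (length R12 + length Gs) \<le> B"
          using Ra Ri' lG lG' d0 RS nn[of "length P"] nn[of "length P1"] nn[of "length P2"] nn[of "length Q"] nn[of "length Q1"] nn[of "length Q2"] nn[of "length R"] nn[of "length R1"] nn[of "length R2"] nn[of "length R11"] nn[of "length R12"] nn[of "length Gs"] nn[of "length G1"] nn[of "length G2"] nn[of "length G'"] nn[of "length H"] nn[of "length H'"] nn[of "length P11"] nn[of "length P12"] RlP1 unfolding B_def of_nat_add by argo
        have z3: "real (length G' + length H') \<le> B"
          using Ra Ri' lG lG' RH' d0 RS nn[of "length P"] nn[of "length P1"] nn[of "length P2"] nn[of "length Q"] nn[of "length Q1"] nn[of "length Q2"] nn[of "length R"] nn[of "length R1"] nn[of "length R2"] nn[of "length R11"] nn[of "length R12"] nn[of "length Gs"] nn[of "length G1"] nn[of "length G2"] nn[of "length G'"] nn[of "length H"] nn[of "length H'"] nn[of "length P11"] nn[of "length P12"] RlP1 unfolding B_def of_nat_add by argo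
        show ?thesis
          apply (rule exI[of _ a1], rule exI[of _ a2], rule exI[of _ a3])
          using hom z1 z2 z3 gr11 gr12 gp11 gp12 gg gg' gh'
          by (simp add: a1_def a2_def a3_def)
      qed
    qed
    then obtain a1 a2 a3 where A: "\<forall>T\<in>set [a1,a2,a3]. geo_triangle G T \<and> real (tri_size T) \<le> B"
      and hT1: "homotopic G [a1,a2,a3] (x, R1@Gs, w) (x, P1, w)" by blast
    define c4 where "c4 = ((w,P2,y),(y,Q,z),(w,H,z))"
    define c5 where "c5 = ((v,Gs,w),(w,H,z),(v,R2,z))"
    define Ts where "Ts = [c4,c5,a1,a2,a3]"
    have hT1': "homotopic G Ts (x, R1@Gs, w) (x, P1, w)"
      by (rule hom_mono[OF _ hT1]) (auto simp: Ts_def)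
    have h4: "homotopic G Ts (w, P2@Q, z) (w, H, z)"
      by (rule hom_cell) (auto simp: Ts_def c4_def wverts)
    have h5: "homotopic G Ts (v, Gs@H, z) (v, R2, z)"
      by (rule hom_cell) (use r2 in \<open>auto simp: Ts_def c5_def\<close>)
    have rg: "awalk x (R1@Gs) w" using r1 geo_walk[OF gg] by (rule awalk_appendI)
    have s1: "homotopic G Ts (x, P@Q, z) (x, R1@Gs@P2@Q, z)"
      by (rule hom_ctx[OF hom_sym[OF hT1'] xnil, where suf="P2@Q"]) (simp_all add: PP)
    have s2: "homotopic G Ts (x, R1@Gs@P2@Q, z) (x, R1@Gs@H, z)"
      by (rule hom_ctx[OF h4 rg, where suf="[]"]) simp_all
    have s3: "homotopic G Ts (x, R1@Gs@H, z) (x, R, z)"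
      by (rule hom_ctx[OF h5 r1, where suf="[]"]) (simp_all add: RR)
    have hom: "homotopic G Ts (x, P@Q, z) (x, R, z)" using s1 s2 s3 by (meson hom_trans)
    have z4: "real (length P2 + length Q) \<le> B"
      using Rj1 Rj2 RS RP d0 nn[of "length P"] nn[of "length P1"] nn[of "length P2"] nn[of "length Q"] nn[of "length Q1"] nn[of "length Q2"] nn[of "length R"] nn[of "length R1"] nn[of "length R2"] nn[of "length R11"] nn[of "length R12"] nn[of "length Gs"] nn[of "length G1"] nn[of "length G2"] nn[of "length G'"] nn[of "length H"] nn[of "length H'"] nn[of "length P11"] nn[of "length P12"] RlP1 unfolding B_def of_nat_add by argo
    have z5: "real (length Gs + length H) \<le> B"
      using Rj1 Rj2 RS RP d0 lG RH nn[of "length P"] nn[of "length P1"] nn[of "length P2"] nn[of "length Q"] nn[of "length Q1"] nn[of "length Q2"] nn[of "length R"] nn[of "length R1"] nn[of "length R2"] nn[of "length R11"] nn[of "length R12"] nn[of "length Gs"] nn[of "length G1"] nn[of "length G2"] nn[of "length G'"] nn[of "length H"] nn[of "length H'"] nn[of "length P11"] nn[of "length P12"] RlP1 unfolding B_def of_nat_add by argo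
    show ?thesis
      apply (rule exI[of _ Ts])
      using hom z4 z5 A gp2 gq gh gg gr2
      by (simp add: Ts_def c4_def c5_def B_def)
  qed
qed

end

context wf_digraph begin

lemma nn': "0 \<le> real (n::nat)" by simp

lemma caseB:
  assumes d0: "0 \<le> \<delta>" and SH: "strongly_hyperbolic G \<delta>"
    and gp: "geodesic G (x,P,y)" and gq: "geodesic G (y,Q,z)" and gr: "geodesic G (x,R,z)"
    and mn: "length P < length Q"
  shows "\<exists>Ts. length Ts = 5 \<and> (\<forall>T'\<in>set Ts. geo_triangle G T' \<and>
     real (tri_size T') \<le> 3/4 * real (length P + length Q) + 2*\<delta> + 1) \<and>
     homotopic G Ts (x, P@Q, z) (x, R, z)"
proof -
  define S where "S = length P + length Q"
  define t where "t = (S+3) div 4"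
  define l where "l = length Q - t"
  have t1: "S \<le> 4*t" and t2: "4*t \<le> S+3" and tQ: "t \<le> length Q"
    using mn unfolding t_def S_def by auto
  have Rt1: "real S \<le> 4*real t" and Rt2: "4*real t \<le> real S + 3"
    using t1 t2 by linarith+
  have RS: "real S = real (length P) + real (length Q)" by (simp add: S_def)
  have Rmn: "real (length P) \<le> real (length Q)" using mn by simp
  have wP: "awalk x P y" and wQ: "awalk y Q z" and wR: "awalk x R z"
    using gp gq gr by (auto dest: geo_walk)
  have "awalk x (P@Q) z" using wP wQ by (rule awalk_appendI)
  hence "length R \<le> length (P@Q)" using gr unfolding gd_iff by blast
  hence kS: "length R \<le> S" unfolding S_def by simp
  define Q1 Q2 where "Q1 = take l Q" and "Q2 = drop l Q"
  have QQ: "Q = Q1 @ Q2" by (simp add: Q1_def Q2_def)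
  have lQ2: "length Q2 = t" using tQ by (simp add: Q2_def l_def)
  have RlQ2: "real (length Q2) = real t" using lQ2 by simp
  have RQ: "real (length Q) = real (length Q1) + real (length Q2)" using QQ
    by (metis length_append of_nat_add)
  obtain w where w1: "awalk y Q1 w" and w2: "awalk w Q2 z"
    using split_at[OF wQ, of l] unfolding Q1_def Q2_def by blast
  have gq1: "geodesic G (y,Q1,w)" and gq2: "geodesic G (w,Q2,z)"
    using geo_split[of y Q1 Q2 z w] gq QQ w1 by auto
  have wv: "w \<in> set (awalk_verts y Q)" using vert_in[of y Q1 Q2 z w] wQ QQ w1 by simp
  have xv: "x \<in> verts G" using wP by blast
  have wverts: "w \<in> verts G" using w2 by blast
  have xnil: "awalk x [] x" using xv by (simp add: awalk_Nil_iff)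
  have wnil: "awalk w [] w" using wverts by (simp add: awalk_Nil_iff)
  from thin_q[OF SH gp gq gr wv] show ?thesis
  proof
    assume "\<exists>v\<in>set (awalk_verts x P). dist_le G v w \<delta>"
    then obtain v where vP: "v \<in> set (awalk_verts x P)" and dv: "dist_le G v w \<delta>" by blast
    obtain P1 P2 where PP: "P = P1@P2" and p1: "awalk x P1 v" and p2: "awalk v P2 y"
      using decomp[OF wP vP] by blast
    have gp1: "geodesic G (x,P1,v)" and gp2: "geodesic G (v,P2,y)"
      using geo_split[of x P1 P2 y v] gp PP p1 by auto
    obtain Gs where gg: "geodesic G (v,Gs,w)" and lG: "real (length Gs) \<le> \<delta>"
      using dist_le_geo[OF dv] by blast
    obtain H where gh: "geodesic G (x,H,w)" and lH: "length H \<le> length (P1@Gs)"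
      using geo_exists[OF awalk_appendI[OF p1 geo_walk[OF gg]]] by blast
    have RH: "real (length H) \<le> real (length P1) + real (length Gs)" using lH by simp
    have RP: "real (length P) = real (length P1) + real (length P2)" using PP by simp
    have vv: "v \<in> verts G" using p2 by blast
    define c1 where "c1 = ((v,P2,y),(y,Q1,w),(v,Gs,w))"
    define c2 where "c2 = ((x,P1,v),(v,Gs,w),(x,H,w))"
    define c3 where "c3 = ((x,H,w),(w,Q2,z),(x,R,z))"
    define Ts where "Ts = [c1,c2,c3,c3,c3]"
    have h1: "homotopic G Ts (v, P2@Q1, w) (v, Gs, w)"
      by (rule hom_cell) (auto simp: Ts_def c1_def vv)
    have h2: "homotopic G Ts (x, P1@Gs, w) (x, H, w)"
      by (rule hom_cell) (auto simp: Ts_def c2_def xv)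
    have h3: "homotopic G Ts (x, H@Q2, z) (x, R, z)"
      by (rule hom_cell) (auto simp: Ts_def c3_def xv)
    have s1: "homotopic G Ts (x, P@Q, z) (x, P1@Gs@Q2, z)"
      by (rule hom_ctx[OF h1 p1, where suf="Q2"]) (simp_all add: PP QQ)
    have s2: "homotopic G Ts (x, P1@Gs@Q2, z) (x, H@Q2, z)"
      by (rule hom_ctx[OF h2 xnil, where suf="Q2"]) simp_all
    have hom: "homotopic G Ts (x, P@Q, z) (x, R, z)" using s1 s2 h3 by (meson hom_trans)
    have z1: "real (length P2 + length Q1) \<le> 3/4 * real (length P + length Q) + 2*\<delta> + 1"
      using Rt1 Rt2 RS RP RQ RlQ2 d0 nn'[of "length P1"] nn'[of "length P2"] unfolding of_nat_add by argo
    have z2: "real (length P1 + length Gs) \<le> 3/4 * real (length P + length Q) + 2*\<delta> + 1"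
      using Rt1 Rt2 RS RP RQ RlQ2 d0 lG Rmn nn'[of "length P1"] nn'[of "length P2"] unfolding of_nat_add by argo
    have z3: "real (length H + length Q2) \<le> 3/4 * real (length P + length Q) + 2*\<delta> + 1"
      using Rt1 Rt2 RS RP RQ RlQ2 d0 lG Rmn RH nn'[of "length P1"] nn'[of "length P2"] unfolding of_nat_add by argo
    show ?thesis
      apply (rule exI[of _ Ts])
      using hom z1 z2 z3 gp1 gp2 gq1 gq2 gg gh gr
      by (simp add: Ts_def c1_def c2_def c3_def)
  next
    assume "\<exists>v\<in>set (awalk_verts x R). dist_le G w v \<delta>"
    then obtain v where vR: "v \<in> set (awalk_verts x R)" and dv: "dist_le G w v \<delta>" by blast
    obtain R1 R2 where RR: "R = R1@R2" and r1: "awalk x R1 v" and r2: "awalk v R2 z"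
      using decomp[OF wR vR] by blast
    have gr1: "geodesic G (x,R1,v)" and gr2: "geodesic G (v,R2,z)"
      using geo_split[of x R1 R2 z v] gr RR r1 by auto
    obtain Gs where gg: "geodesic G (w,Gs,v)" and lG: "real (length Gs) \<le> \<delta>"
      using dist_le_geo[OF dv] by blast
    obtain H where gh: "geodesic G (x,H,w)" and lH: "length H \<le> length (P@Q1)"
      using geo_exists[OF awalk_appendI[OF wP w1]] by blast
    have RH: "real (length H) \<le> real (length P) + real (length Q1)" using lH by simp
    have Ri: "real (length R2) \<le> real S" using kS RR by simp
    have vv: "v \<in> verts G" using r2 by blast
    define B where "B = 3/4 * real (length P + length Q) + 2*\<delta> + 1"
    have T1: "\<exists>a1 a2 a3. (\<forall>T\<in>set [a1,a2,a3]. geo_triangle G T \<and> real (tri_size T) \<le> B)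
               \<and> homotopic G [a1,a2,a3] (w, Gs@R2, z) (w, Q2, z)"
    proof -
      define i where "i = length R2"
      define R21 R22 where "R21 = take (i div 2) R2" and "R22 = drop (i div 2) R2"
      have R2R: "R2 = R21 @ R22" by (simp add: R21_def R22_def)
      have lR21: "length R21 = i div 2" by (simp add: R21_def i_def)
      have lR22: "length R22 = i - i div 2" by (simp add: R22_def i_def)
      have Ra: "2 * real (length R21) \<le> real i" "real i \<le> 2 * real (length R21) + 1"
        "real i = real (length R21) + real (length R22)" using lR21 lR22 by linarith+
      have Ri': "real i \<le> real S" using Ri i_def by simp
      obtain v' where r21: "awalk v R21 v'" and r22: "awalk v' R22 z"
        using split_at[OF r2, of "i div 2"] unfolding R21_def R22_def by blast
      have gr21: "geodesic G (v,R21,v')" and gr22: "geodesic G (v',R22,z)"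
        using geo_split[of v R21 R22 z v'] gr2 R2R r21 by auto
      have v'in: "v' \<in> set (awalk_verts v R2)" using vert_in[of v R21 R22 z v'] r2 R2R r21 by simp
      have v'v: "v' \<in> verts G" using r22 by blast
      from thin_q[OF SH gg gr2 gq2 v'in] show ?thesis
      proof
        assume "\<exists>u\<in>set (awalk_verts w Gs). dist_le G u v' \<delta>"
        then obtain u where uG: "u \<in> set (awalk_verts w Gs)" and du: "dist_le G u v' \<delta>" by blast
        obtain G1 G2 where GG: "Gs = G1@G2" and g1: "awalk w G1 u" and g2: "awalk u G2 v"
          using decomp[OF geo_walk[OF gg] uG] by blast
        have gg1: "geodesic G (w,G1,u)" and gg2: "geodesic G (u,G2,v)"
          using geo_split[of w G1 G2 v u] gg GG g1 by auto
        obtain G' where gg': "geodesic G (u,G',v')" and lG': "real (length G') \<le> \<delta>"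
          using dist_le_geo[OF du] by blast
        obtain H' where gh': "geodesic G (w,H',v')" and lH': "length H' \<le> length (G1@G')"
          using geo_exists[OF awalk_appendI[OF g1 geo_walk[OF gg']]] by blast
        have RH': "real (length H') \<le> real (length G1) + real (length G')" using lH' by simp
        have RG: "real (length Gs) = real (length G1) + real (length G2)" using GG by simp
        have uv: "u \<in> verts G" using g2 by blast
        define a1 where "a1 = ((u,G2,v),(v,R21,v'),(u,G',v'))"
        define a2 where "a2 = ((w,G1,u),(u,G',v'),(w,H',v'))"
        define a3 where "a3 = ((w,H',v'),(v',R22,z),(w,Q2,z))"
        have h1: "homotopic G [a1,a2,a3] (u, G2@R21, v') (u, G', v')"
          by (rule hom_cell) (auto simp: a1_def uv)
        have h2: "homotopic G [a1,a2,a3] (w, G1@G', v') (w, H', v')"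
          by (rule hom_cell) (auto simp: a2_def wverts)
        have h3: "homotopic G [a1,a2,a3] (w, H'@R22, z) (w, Q2, z)"
          by (rule hom_cell) (auto simp: a3_def wverts)
        have s1: "homotopic G [a1,a2,a3] (w, Gs@R2, z) (w, G1@G'@R22, z)"
          by (rule hom_ctx[OF h1 g1, where suf="R22"]) (simp_all add: R2R GG)
        have s2: "homotopic G [a1,a2,a3] (w, G1@G'@R22, z) (w, H'@R22, z)"
          by (rule hom_ctx[OF h2 wnil, where suf="R22"]) simp_all
        have hom: "homotopic G [a1,a2,a3] (w, Gs@R2, z) (w, Q2, z)"
          using s1 s2 h3 by (meson hom_trans)
        have z1: "real (length G2 + length R21) \<le> B"
          using Ra Ri' RG lG lG' d0 RS Rt1 Rt2 RlQ2 nn'[of "length G1"] nn'[of "length P"] nn'[of "length Q"] unfolding B_def of_nat_add by argo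
        have z2: "real (length G1 + length G') \<le> B"
          using Ra Ri' RG lG lG' d0 RS Rt1 Rt2 RlQ2 nn'[of "length G2"] nn'[of "length P"] nn'[of "length Q"] unfolding B_def of_nat_add by argo
        have z3: "real (length H' + length R22) \<le> B"
          using Ra Ri' RG lG lG' RH' d0 RS Rt1 Rt2 RlQ2 nn'[of "length G2"] nn'[of "length P"] nn'[of "length Q"] unfolding B_def of_nat_add by argo
        show ?thesis
          apply (rule exI[of _ a1], rule exI[of _ a2], rule exI[of _ a3])
          using hom z1 z2 z3 gr21 gr22 gg1 gg2 gg' gh' gq2
          by (simp add: a1_def a2_def a3_def)
      next
        assume "\<exists>u\<in>set (awalk_verts w Q2). dist_le G v' u \<delta>"
        then obtain u where uQ: "u \<in> set (awalk_verts w Q2)" and du: "dist_le G v' u \<delta>" by blast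
        obtain Q21 Q22 where Q2Q: "Q2 = Q21@Q22" and q21: "awalk w Q21 u" and q22: "awalk u Q22 z"
          using decomp[OF w2 uQ] by blast
        have gq21: "geodesic G (w,Q21,u)" and gq22: "geodesic G (u,Q22,z)"
          using geo_split[of w Q21 Q22 z u] gq2 Q2Q q21 by auto
        obtain G' where gg': "geodesic G (v',G',u)" and lG': "real (length G') \<le> \<delta>"
          using dist_le_geo[OF du] by blast
        obtain H' where gh': "geodesic G (w,H',v')" and lH': "length H' \<le> length (Gs@R21)"
          using geo_exists[OF awalk_appendI[OF geo_walk[OF gg] r21]] by blast
        have RH': "real (length H') \<le> real (length Gs) + real (length R21)" using lH' by simp
        have RQ2: "real (length Q2) = real (length Q21) + real (length Q22)" using Q2Q by simp
        define a1 where "a1 = ((w,Gs,v),(v,R21,v'),(w,H',v'))"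
        define a2 where "a2 = ((w,H',v'),(v',G',u),(w,Q21,u))"
        define a3 where "a3 = ((v',G',u),(u,Q22,z),(v',R22,z))"
        have h1: "homotopic G [a1,a2,a3] (w, Gs@R21, v') (w, H', v')"
          by (rule hom_cell) (auto simp: a1_def wverts)
        have h2: "homotopic G [a1,a2,a3] (w, H'@G', u) (w, Q21, u)"
          by (rule hom_cell) (auto simp: a2_def wverts)
        have h3: "homotopic G [a1,a2,a3] (v', G'@Q22, z) (v', R22, z)"
          by (rule hom_cell) (auto simp: a3_def v'v)
        have s1: "homotopic G [a1,a2,a3] (w, Gs@R2, z) (w, H'@R22, z)"
          by (rule hom_ctx[OF h1 wnil, where suf="R22"]) (simp_all add: R2R)
        have s2: "homotopic G [a1,a2,a3] (w, H'@R22, z) (w, H'@G'@Q22, z)"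
          by (rule hom_ctx[OF hom_sym[OF h3] geo_walk[OF gh'], where suf="[]"]) simp_all
        have s3: "homotopic G [a1,a2,a3] (w, H'@G'@Q22, z) (w, Q2, z)"
          by (rule hom_ctx[OF h2 wnil, where suf="Q22"]) (simp_all add: Q2Q)
        have hom: "homotopic G [a1,a2,a3] (w, Gs@R2, z) (w, Q2, z)"
          using s1 s2 s3 by (meson hom_trans)
        have z1: "real (length Gs + length R21) \<le> B"
          using Ra Ri' lG lG' d0 RS Rt1 Rt2 RlQ2 nn'[of "length R22"] nn'[of "length P"] nn'[of "length Q"] unfolding B_def of_nat_add by argo
        have z2: "real (length H' + length G') \<le> B"
          using Ra Ri' lG lG' RH' d0 RS Rt1 Rt2 RlQ2 nn'[of "length R22"] nn'[of "length P"] nn'[of "length Q"] unfolding B_def of_nat_add by argo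
        have z3: "real (length G' + length Q22) \<le> B"
          using Ra Ri' lG lG' d0 RS Rt1 Rt2 RlQ2 RQ2 nn'[of "length Q21"] nn'[of "length P"] nn'[of "length Q"] unfolding B_def of_nat_add by argo
        show ?thesis
          apply (rule exI[of _ a1], rule exI[of _ a2], rule exI[of _ a3])
          using hom z1 z2 z3 gr21 gr22 gq21 gq22 gg gg' gh'
          by (simp add: a1_def a2_def a3_def)
      qed
    qed
    then obtain a1 a2 a3 where A: "\<forall>T\<in>set [a1,a2,a3]. geo_triangle G T \<and> real (tri_size T) \<le> B"
      and hT1: "homotopic G [a1,a2,a3] (w, Gs@R2, z) (w, Q2, z)" by blast
    define c1 where "c1 = ((x,P,y),(y,Q1,w),(x,H,w))"
    define c2 where "c2 = ((x,H,w),(w,Gs,v),(x,R1,v))"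
    define Ts where "Ts = [c1,c2,a1,a2,a3]"
    have hT1': "homotopic G Ts (w, Gs@R2, z) (w, Q2, z)"
      by (rule hom_mono[OF _ hT1]) (auto simp: Ts_def)
    have h1: "homotopic G Ts (x, P@Q1, w) (x, H, w)"
      by (rule hom_cell) (auto simp: Ts_def c1_def xv)
    have h2: "homotopic G Ts (x, H@Gs, v) (x, R1, v)"
      by (rule hom_cell) (auto simp: Ts_def c2_def xv)
    have s1: "homotopic G Ts (x, P@Q, z) (x, H@Q2, z)"
      by (rule hom_ctx[OF h1 xnil, where suf="Q2"]) (simp_all add: QQ)
    have s2: "homotopic G Ts (x, H@Q2, z) (x, H@Gs@R2, z)"
      by (rule hom_ctx[OF hom_sym[OF hT1'] geo_walk[OF gh], where suf="[]"]) simp_all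
    have s3: "homotopic G Ts (x, H@Gs@R2, z) (x, R, z)"
      by (rule hom_ctx[OF h2 xnil, where suf="R2"]) (simp_all add: RR)
    have hom: "homotopic G Ts (x, P@Q, z) (x, R, z)" using s1 s2 s3 by (meson hom_trans)
    have z4: "real (length P + length Q1) \<le> B"
      using Rt1 Rt2 RS RQ RlQ2 d0 unfolding B_def of_nat_add by argo
    have z5: "real (length H + length Gs) \<le> B"
      using Rt1 Rt2 RS RQ RlQ2 d0 lG RH unfolding B_def of_nat_add by argo
    show ?thesis
      apply (rule exI[of _ Ts])
      using hom z4 z5 A gp gq1 gh gg gr1
      by (simp add: Ts_def c1_def c2_def B_def)
  qed
qed

end

theorem lemma5p4:
  fixes G :: "('a,'b) pre_digraph" and \<delta> :: real and T :: "('a,'b) dtriangle"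
  assumes "wf_digraph G"
    and "\<delta> \<ge> 0"
    and "strongly_hyperbolic G \<delta>"
    and "geo_triangle G T"
  shows "\<exists>Ts. length Ts = 5 \<and>
           (\<forall>T'\<in>set Ts. geo_triangle G T' \<and>
              real (tri_size T') \<le> 3/4 * real (tri_size T) + 2 * \<delta> + 1) \<and>
           tessellates_triangle G Ts T"
proof -
  interpret wf_digraph G by fact
  obtain p q r where T: "T = (p,q,r)" by (cases T) auto
  obtain x P y where p: "p = (x,P,y)" by (cases p) auto
  obtain y' Q z where q: "q = (y',Q,z)" by (cases q) auto
  obtain x' R z' where r: "r = (x',R,z')" by (cases r) auto
  have g: "geodesic G (x,P,y)" "geodesic G (y,Q,z)" "geodesic G (x,R,z)"
    using assms(4) unfolding T p q r geo_tri_simp by auto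
  have sz: "tri_size T = length P + length Q" unfolding T p q r by simp
  have tess: "tessellates_triangle G Ts T \<longleftrightarrow> homotopic G Ts (x,P@Q,z) (x,R,z)" for Ts
    using assms(4) unfolding T p q r geo_tri_simp
    by (auto simp: tessellates_triangle_def pcomp_def pstart_def parcs_def pend_def)
  show ?thesis
  proof (cases "length Q \<le> length P")
    case True
    from caseA[OF assms(2,3) g True] show ?thesis unfolding sz tess .
  next
    case False
    hence "length P < length Q" by simp
    from caseB[OF assms(2,3) g this] show ?thesis unfolding sz tess .
  qed
qed

end
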